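(* Let $G$ be a graph with a cut-vertex $v$ such that $G-\{v\}$ is the disjoint union $G_1\cup G_2$ of two graphs (with no edges between $G_1$ and $G_2$; $G_1,G_2$ need not be connected) and $v$ has at least two neighbours in $G_1$ and at least two neighbours in $G_2$. Then $G\notin\mathcal{G}^{\rm SSP}$.
   Context: All graphs are finite, simple, undirected. For a graph $G$ on $\{1,\ldots,n\}$, $\mathcal{S}(G)$ is the set of real symmetric $n\times n$ matrices $A=(a_{ij})$ with $a_{ij}\neq0$ iff $\{i,j\}\in E(G)$ for $i\neq j$ (diagonal arbitrary). A real symmetric $A$ has the strong spectral property (SSP) if the only real symmetric $X$ with $A\circ X=0$, $I\circ X=0$, $AX-XA=0$ is $X=0$ ($\circ$ = entrywise product). $\mathcal{G}^{\rm SSP}$ is the set of graphs $G$ such that every matrix in $\mathcal{S}(G)$ has the SSP. *)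

theory Defs
  imports "HOL-Analysis.Analysis"
begin

text \<open>A finite simple graph on the vertex type 'n (a finite type standing for {1..n})
  is given by a symmetric irreflexive adjacency relation.\<close>
definition simple_graph :: "('n::finite \<Rightarrow> 'n \<Rightarrow> bool) \<Rightarrow> bool" where
  "simple_graph E \<longleftrightarrow> (\<forall>i j. E i j \<longleftrightarrow> E j i) \<and> (\<forall>i. \<not> E i i)"

definition sym_mat :: "real^'n^'n \<Rightarrow> bool" where
  "sym_mat A \<longleftrightarrow> transpose A = A"

definition S_graph :: "('n::finite \<Rightarrow> 'n \<Rightarrow> bool) \<Rightarrow> (real^'n^'n) set" where
  "S_graph E = {A. sym_mat A \<and> (\<forall>i j. i \<noteq> j \<longrightarrow> (A$i$j \<noteq> 0 \<longleftrightarrow> E i j))}"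

definition SSP :: "real^'n^'n \<Rightarrow> bool" where
  "SSP A \<longleftrightarrow> (\<forall>X::real^'n^'n. sym_mat X \<and> (\<forall>i j. A$i$j * X$i$j = 0)
        \<and> (\<forall>i. X$i$i = 0) \<and> A ** X - X ** A = 0 \<longrightarrow> X = 0)"

definition in_G_SSP :: "('n::finite \<Rightarrow> 'n \<Rightarrow> bool) \<Rightarrow> bool" where
  "in_G_SSP E \<longleftrightarrow> (\<forall>A \<in> S_graph E. SSP A)"

end

theory Submission
  imports Defs
begin

lemma side_lemma:
  fixes E :: "'n::finite \<Rightarrow> 'n \<Rightarrow> bool" and w d :: "'n \<Rightarrow> real"
  assumes sg: "simple_graph E"
    and U: "U1 \<union> U2 = UNIV - {v}"
    and noe: "\<forall>x\<in>U1. \<forall>y\<in>U2. \<not> E x y"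
    and wv: "w v = 0"
    and dd: "\<forall>i. i \<noteq> v \<longrightarrow> d i * w i + (\<Sum>k\<in>UNIV. if E i k then w k else 0) = 0"
    and sv: "(\<Sum>k\<in>{u\<in>U1. E v u}. w k) = 0"
  shows "(\<Sum>k\<in>UNIV. (if i = k then d i else if E i k then 1 else 0) * (if k\<in>U1 then w k else 0)) = 0"
proof -
  have irr: "\<And>i. \<not> E i i" and sy: "\<And>i j. E i j = E j i" using sg unfolding simple_graph_def by auto
  have split: "\<And>k. (if i = k then d i else if E i k then 1 else 0) * (if k\<in>U1 then w k else 0)
      = (if k = i then d i * (if i\<in>U1 then w i else 0) else 0) + (if E i k then (if k\<in>U1 then w k else 0) else 0)"
    using irr by auto
  have S: "(\<Sum>k\<in>UNIV. (if i = k then d i else if E i k then 1 else 0) * (if k\<in>U1 then w k else 0))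
     = d i * (if i\<in>U1 then w i else 0) + (\<Sum>k\<in>UNIV. if E i k then (if k\<in>U1 then w k else 0) else 0)"
    unfolding split sum.distrib by simp
  show ?thesis
  proof (cases "i = v")
    case True
    have "(\<Sum>k\<in>UNIV. if E i k then (if k\<in>U1 then w k else 0) else 0) = (\<Sum>k\<in>{u\<in>U1. E v u}. w k)"
      by (rule sum.mono_neutral_cong_right) (auto simp: True)
    then show ?thesis using S sv True U by auto
  next
    case False
    show ?thesis
    proof (cases "i \<in> U1")
      case True
      have "(\<Sum>k\<in>UNIV. if E i k then (if k\<in>U1 then w k else 0) else 0) = (\<Sum>k\<in>UNIV. if E i k then w k else 0)"
      proof (rule sum.cong)
        fix k
        show "(if E i k then (if k\<in>U1 then w k else 0) else 0) = (if E i k then w k else 0)"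
        proof (cases "k \<in> U1 \<or> k = v")
          case True then show ?thesis using wv by auto
        next
          case False
          then have "k \<in> U2" using U by auto
          then show ?thesis using noe \<open>i \<in> U1\<close> by auto
        qed
      qed simp
      then show ?thesis using S dd False True by auto
    next
      case nU1: False
      have "(\<Sum>k\<in>UNIV. if E i k then (if k\<in>U1 then w k else 0) else 0) = 0"
      proof (rule sum.neutral, intro ballI)
        fix k
        have "i \<in> U2" using nU1 False U by auto
        then show "(if E i k then (if k\<in>U1 then w k else 0) else 0) = 0"
          using noe sy by auto
      qed
      then show ?thesis using S nU1 by simp
    qed
  qed
qed

lemma nbr_sum:
  fixes w :: "'a \<Rightarrow> real"
  assumes "finite N" "p \<in> N" "w p = - (real (card N) - 1)" "\<forall>k\<in>N - {p}. w k = 1"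
  shows "(\<Sum>k\<in>N. w k) = 0"
proof -
  have "(\<Sum>k\<in>N. w k) = w p + (\<Sum>k\<in>N - {p}. w k)"
    using assms by (simp add: sum.remove)
  also have "(\<Sum>k\<in>N - {p}. w k) = real (card N) - 1"
  proof -
    have "card N \<ge> 1" using assms by (metis One_nat_def Suc_leI card_gt_0_iff empty_iff)
    then show ?thesis using assms by (simp add: card_Diff_singleton of_nat_diff)
  qed
  finally show ?thesis using assms by simp
qed

theorem corollary2p6:
  fixes E :: "'n::finite \<Rightarrow> 'n \<Rightarrow> bool" and v :: 'n and V1 V2 :: "'n set"
  assumes "simple_graph E"
    and "V1 \<inter> V2 = {}" and "V1 \<union> V2 = UNIV - {v}"
    and "\<forall>x\<in>V1. \<forall>y\<in>V2. \<not> E x y"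
    and "card {u \<in> V1. E v u} \<ge> 2" and "card {u \<in> V2. E v u} \<ge> 2"
  shows "\<not> in_G_SSP E"
proof -
  have irr: "\<And>i. \<not> E i i" and sy: "\<And>i j. E i j = E j i" using assms(1) unfolding simple_graph_def by auto
  have noe2: "\<forall>x\<in>V2. \<forall>y\<in>V1. \<not> E x y" using assms(4) sy by blast
  have U2: "V2 \<union> V1 = UNIV - {v}" using assms(3) by auto
  define N1 where "N1 = {u \<in> V1. E v u}"
  define N2 where "N2 = {u \<in> V2. E v u}"
  have "N1 \<noteq> {}" using assms(5) N1_def by (metis card.empty not_numeral_le_zero)
  then obtain p where p: "p \<in> N1" by blast
  have "N2 \<noteq> {}" using assms(6) N2_def by (metis card.empty not_numeral_le_zero)
  then obtain q where q: "q \<in> N2" by blast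
  have pV1: "p \<in> V1" and qV2: "q \<in> V2" using p q N1_def N2_def by auto
  have pq: "p \<noteq> q" using pV1 qV2 assms(2) by auto
  have pv: "p \<noteq> v" and qv: "q \<noteq> v" using pV1 qV2 assms(3) by auto
  have c1: "real (card N1) \<ge> 2" and c2: "real (card N2) \<ge> 2" using assms(5,6) N1_def N2_def by auto
  define w :: "'n \<Rightarrow> real" where "w u = (if u = v then 0 else if u = p then - (real (card N1) - 1)
      else if u = q then - (real (card N2) - 1) else 1)" for u
  have wnz: "\<And>u. u \<noteq> v \<Longrightarrow> w u \<noteq> 0" using c1 c2 unfolding w_def by auto
  have wv: "w v = 0" unfolding w_def by simp
  define d where "d i = (if i = v then 0 else - (\<Sum>k\<in>UNIV. if E i k then w k else 0) / w i)" for i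
  have dd: "\<forall>i. i \<noteq> v \<longrightarrow> d i * w i + (\<Sum>k\<in>UNIV. if E i k then w k else 0) = 0"
    using wnz unfolding d_def by auto
  have s1: "(\<Sum>k\<in>{u\<in>V1. E v u}. w k) = 0"
    unfolding N1_def[symmetric]
    apply (rule nbr_sum[OF _ p])
    using pv pq qV2 N1_def assms(2,3) unfolding w_def by auto
  have s2: "(\<Sum>k\<in>{u\<in>V2. E v u}. w k) = 0"
    unfolding N2_def[symmetric]
    apply (rule nbr_sum[OF _ q])
    using qv pq pV1 N2_def assms(2,3) unfolding w_def by auto
  define a where "a i k = (if i = k then d i else if E i k then 1 else (0::real))" for i k
  have asym: "\<And>i k. a i k = a k i" unfolding a_def using sy by auto
  define x where "x k = (if k \<in> V1 then w k else 0)" for k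
  define y where "y k = (if k \<in> V2 then w k else 0)" for k
  have ax: "\<And>i. (\<Sum>k\<in>UNIV. a i k * x k) = 0"
    unfolding a_def x_def by (rule side_lemma[OF assms(1) assms(3) assms(4) wv dd s1])
  have ay: "\<And>i. (\<Sum>k\<in>UNIV. a i k * y k) = 0"
    unfolding a_def y_def by (rule side_lemma[OF assms(1) U2 noe2 wv dd s2])
  define A :: "real^'n^'n" where "A = (\<chi> i j. a i j)"
  define X :: "real^'n^'n" where "X = (\<chi> i j. x i * y j + y i * x j)"
  have AS: "A \<in> S_graph E"
    unfolding S_graph_def sym_mat_def A_def
    by (auto simp: vec_eq_iff transpose_def asym, auto simp: a_def split: if_splits)
  have xy0: "\<And>i. x i * y i = 0" unfolding x_def y_def using assms(2) by auto
  have Xs: "sym_mat X" unfolding sym_mat_def X_def by (auto simp: vec_eq_iff transpose_def)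
  have Xd: "\<forall>i. X$i$i = 0" unfolding X_def using xy0 by (simp add: mult.commute)
  have AX: "\<forall>i j. A$i$j * X$i$j = 0"
  proof (intro allI)
    fix i j
    show "A$i$j * X$i$j = 0"
    proof (cases "i = j")
      case True then show ?thesis using Xd by simp
    next
      case False
      have "x i * y j = 0" "y i * x j = 0" if "E i j"
        using that assms(4) noe2 unfolding x_def y_def by auto
      then show ?thesis unfolding A_def X_def a_def using False by auto
    qed
  qed
  have comm: "A ** X - X ** A = 0"
  proof -
    have "(A ** X)$i$j = 0" for i j
    proof -
      have "(A ** X)$i$j = (\<Sum>k\<in>UNIV. a i k * (x k * y j + y k * x j))"
        unfolding A_def X_def matrix_matrix_mult_def by simp
      also have "\<dots> = y j * (\<Sum>k\<in>UNIV. a i k * x k) + x j * (\<Sum>k\<in>UNIV. a i k * y k)"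
        by (simp add: sum_distrib_left sum.distrib algebra_simps)
      finally show ?thesis using ax ay by simp
    qed
    moreover have "(X ** A)$i$j = 0" for i j
    proof -
      have "(X ** A)$i$j = (\<Sum>k\<in>UNIV. (x i * y k + y i * x k) * a j k)"
        unfolding A_def X_def matrix_matrix_mult_def by (simp add: asym)
      also have "\<dots> = x i * (\<Sum>k\<in>UNIV. a j k * y k) + y i * (\<Sum>k\<in>UNIV. a j k * x k)"
        by (simp add: sum_distrib_left sum.distrib algebra_simps)
      finally show ?thesis using ax ay by simp
    qed
    ultimately show ?thesis by (simp add: vec_eq_iff)
  qed
  have Xnz: "X \<noteq> 0"
  proof
    assume "X = 0"
    then have "X$p$q = 0" by simp
    moreover have "X$p$q = w p * w q"
      unfolding X_def x_def y_def using pV1 qV2 assms(2) by auto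
    ultimately show False using wnz pv qv by simp
  qed
  have "\<not> SSP A" unfolding SSP_def using Xs AX Xd comm Xnz by blast
  then show ?thesis unfolding in_G_SSP_def using AS by blast
qed

end
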